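(* For any $\delta\le1/4$, if $\mathcal{I}=([n],[m],\mathcal{V})$ is a $\delta$-ONI instance, then $m\ge 2n$.
   Context: Valuations are additive. $\mathrm{MMS}_i$ is the maximum over partitions of the goods into $n$ bundles of the minimum bundle value for agent $i$. The instance is ordered if $v_i(1)\ge\dots\ge v_i(m)$ for all $i$; normalized if every agent $i$ has an MMS partition into $n$ bundles each of value exactly $1$ to $i$; $\alpha$-irreducible if for every agent $i$: $v_i(1)<\alpha$, $v_i(\{2n-1,2n,2n+1\})<\alpha$, $v_i(\{3n-2,3n-1,3n,3n+1\})<\alpha$, $v_i(\{1,2n+1\})<\alpha$ (each condition only when the goods exist). $\delta$-ONI means ordered, normalized and $(3/4+\delta)$-irreducible. *)

theory Defs
  imports Complex_Main
begin

text \<open>An instance with agents 1..n and goods 1..m; v i j is the value of good j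
  to agent i (nonnegative, since items are goods). Valuations are additive.\<close>

definition val :: "(nat \<Rightarrow> nat \<Rightarrow> real) \<Rightarrow> nat \<Rightarrow> nat set \<Rightarrow> real" where
  "val v i S = (\<Sum>j\<in>S. v i j)"

definition goods_instance :: "nat \<Rightarrow> nat \<Rightarrow> (nat \<Rightarrow> nat \<Rightarrow> real) \<Rightarrow> bool" where
  "goods_instance n m v \<longleftrightarrow> (\<forall>i\<in>{1..n}. \<forall>j\<in>{1..m}. 0 \<le> v i j)"

definition is_partition :: "nat \<Rightarrow> nat \<Rightarrow> (nat \<Rightarrow> nat set) \<Rightarrow> bool" where
  "is_partition n m P \<longleftrightarrow>
     (\<Union>k\<in>{1..n}. P k) = {1..m} \<and>
     (\<forall>k\<in>{1..n}. \<forall>l\<in>{1..n}. k \<noteq> l \<longrightarrow> P k \<inter> P l = {})"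

definition min_bundle :: "(nat \<Rightarrow> nat \<Rightarrow> real) \<Rightarrow> nat \<Rightarrow> nat \<Rightarrow> (nat \<Rightarrow> nat set) \<Rightarrow> real" where
  "min_bundle v n i P = Min ((\<lambda>k. val v i (P k)) ` {1..n})"

definition MMS :: "(nat \<Rightarrow> nat \<Rightarrow> real) \<Rightarrow> nat \<Rightarrow> nat \<Rightarrow> nat \<Rightarrow> real" where
  "MMS v n m i = (SUP P \<in> {P. is_partition n m P}. min_bundle v n i P)"

definition is_MMS_partition :: "(nat \<Rightarrow> nat \<Rightarrow> real) \<Rightarrow> nat \<Rightarrow> nat \<Rightarrow> nat \<Rightarrow> (nat \<Rightarrow> nat set) \<Rightarrow> bool" where
  "is_MMS_partition v n m i P \<longleftrightarrow> is_partition n m P \<and> min_bundle v n i P = MMS v n m i"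

definition ordered :: "nat \<Rightarrow> nat \<Rightarrow> (nat \<Rightarrow> nat \<Rightarrow> real) \<Rightarrow> bool" where
  "ordered n m v \<longleftrightarrow> (\<forall>i\<in>{1..n}. \<forall>j. 1 \<le> j \<and> j < m \<longrightarrow> v i j \<ge> v i (Suc j))"

definition normalized :: "nat \<Rightarrow> nat \<Rightarrow> (nat \<Rightarrow> nat \<Rightarrow> real) \<Rightarrow> bool" where
  "normalized n m v \<longleftrightarrow> (\<forall>i\<in>{1..n}. \<exists>P. is_MMS_partition v n m i P \<and>
       (\<forall>k\<in>{1..n}. val v i (P k) = 1))"

definition irreducible :: "real \<Rightarrow> nat \<Rightarrow> nat \<Rightarrow> (nat \<Rightarrow> nat \<Rightarrow> real) \<Rightarrow> bool" where
  "irreducible \<alpha> n m v \<longleftrightarrow> (\<forall>i\<in>{1..n}.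
      (1 \<le> m \<longrightarrow> v i 1 < \<alpha>) \<and>
      (2*n+1 \<le> m \<longrightarrow> val v i {2*n-1, 2*n, 2*n+1} < \<alpha>) \<and>
      (3*n+1 \<le> m \<longrightarrow> val v i {3*n-2, 3*n-1, 3*n, 3*n+1} < \<alpha>) \<and>
      (2*n+1 \<le> m \<longrightarrow> val v i {1, 2*n+1} < \<alpha>))"

definition ONI :: "real \<Rightarrow> nat \<Rightarrow> nat \<Rightarrow> (nat \<Rightarrow> nat \<Rightarrow> real) \<Rightarrow> bool" where
  "ONI \<delta> n m v \<longleftrightarrow> ordered n m v \<and> normalized n m v \<and> irreducible (3/4 + \<delta>) n m v"

end

theory Submission
  imports Defs
begin

lemma ord_le1:
  assumes "ordered n m v" "i \<in> {1..n}"
  shows "j \<in> {1..m} \<Longrightarrow> v i j \<le> v i 1"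
proof (induction j)
  case 0 then show ?case by simp
next
  case (Suc j)
  show ?case
  proof (cases "j = 0")
    case True then show ?thesis by simp
  next
    case False
    then have "1 \<le> j \<and> j < m" using Suc.prems by auto
    then have "v i (Suc j) \<le> v i j" using assms unfolding ordered_def by blast
    moreover have "v i j \<le> v i 1" using Suc.IH \<open>1 \<le> j \<and> j < m\<close> by auto
    ultimately show ?thesis by linarith
  qed
qed

theorem mainTheorem13:
  fixes \<delta> :: real and n m :: nat and v :: "nat \<Rightarrow> nat \<Rightarrow> real"
  assumes "\<delta> \<le> 1/4"
    and "goods_instance n m v"
    and "ONI \<delta> n m v"
  shows "m \<ge> 2 * n"
proof (cases "n = 0")
  case True then show ?thesis by simp
next
  case False
  have i1: "(1::nat) \<in> {1..n}" using False by auto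
  have ord: "ordered n m v" and norm: "normalized n m v" and irr: "irreducible (3/4+\<delta>) n m v"
    using assms(3) unfolding ONI_def by auto
  obtain P where Pp: "is_partition n m P" and P1: "\<And>k. k \<in> {1..n} \<Longrightarrow> val v 1 (P k) = 1"
    using norm i1 unfolding normalized_def is_MMS_partition_def by blast
  have U: "(\<Union>k\<in>{1..n}. P k) = {1..m}" and D: "\<And>k l. k \<in> {1..n} \<Longrightarrow> l \<in> {1..n} \<Longrightarrow> k \<noteq> l \<Longrightarrow> P k \<inter> P l = {}"
    using Pp unfolding is_partition_def by auto
  have sub: "\<And>k. k \<in> {1..n} \<Longrightarrow> P k \<subseteq> {1..m}" using U by blast
  have fin: "\<And>k. k \<in> {1..n} \<Longrightarrow> finite (P k)" using sub finite_subset by blast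
  have small: "\<And>j. j \<in> {1..m} \<Longrightarrow> v 1 j < 1"
  proof -
    fix j assume j: "j \<in> {1..m}"
    then have "v 1 1 < 3/4 + \<delta>" using irr i1 unfolding irreducible_def by auto
    moreover have "v 1 j \<le> v 1 1" using ord_le1[OF ord i1 j] .
    ultimately show "v 1 j < 1" using assms(1) by linarith
  qed
  have c2: "\<And>k. k \<in> {1..n} \<Longrightarrow> card (P k) \<ge> 2"
  proof (rule ccontr)
    fix k assume k: "k \<in> {1..n}" and "\<not> 2 \<le> card (P k)"
    then have "card (P k) = 0 \<or> card (P k) = 1" by linarith
    then show False
    proof
      assume "card (P k) = 0"
      then have "P k = {}" using fin[OF k] by simp
      then show False using P1[OF k] unfolding val_def by simp
    next
      assume "card (P k) = 1"
      then obtain j where "P k = {j}" using card_1_singletonE by blast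
      then have "j \<in> {1..m}" "val v 1 (P k) = v 1 j" using sub[OF k] unfolding val_def by auto
      then show False using P1[OF k] small by fastforce
    qed
  qed
  have "m = card (\<Union>k\<in>{1..n}. P k)" using U by simp
  also have "\<dots> = (\<Sum>k\<in>{1..n}. card (P k))"
    by (rule card_UN_disjoint) (auto simp: fin D)
  also have "\<dots> \<ge> (\<Sum>k\<in>{1..n}. 2)" by (rule sum_mono) (rule c2)
  finally show ?thesis by simp
qed

end
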